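(* Assume the MDP satisfies the low-rank assumption with parameter $d$. For an arbitrary pair of policies $\pi^\theta=\{\pi^\theta_t\}_{t\in[H]}$ and $\pi^\beta=\{\pi^\beta_t\}_{t\in[H]}$, \[ \widehat{\operatorname{Dis}}\big(d_t^{\pi^\theta},d_t^{\pi^\beta}\big)\le\sum_{i=1}^t\big(\sqrt{dS^2A}\big)^{t-i}\,\|\pi^\theta_i-\pi^\beta_i\|_{\mathrm{op}}\qquad\text{for all }t\in[H]. \]
   Context: MDP: finite state space $\mathcal S$ ($S=|\mathcal S|$), finite action space $\mathcal A$ ($A=|\mathcal A|$), horizon $H$, transitions $P_t(\cdot\mid s,a)$, initial distribution $\mu_1$. Policies $\pi=\{\pi_t:\mathcal S\to\Delta(\mathcal A)\}$, with $s_1\sim\mu_1$, $a_t\sim\pi_t(\cdot\mid s_t)$, $s_{t+1}\sim P_t(\cdot\mid s_t,a_t)$; $d_t^\pi(s,a)=\Pr_\pi(s_t=s,a_t=a)$, viewed as an $S\times A$ matrix; $\pi_t$ is viewed as the $S\times A$ matrix with entries $\pi_t(a\mid s)$. $\|\cdot\|_{\mathrm{op}}$ is the spectral norm and $\widehat{\operatorname{Dis}}(p,q)=\|p-q\|_{\mathrm{op}}$. Low-rank assumption with parameter $d$: with $d'=\lfloor d/2\rfloor$, for each $t$ either $P_t(s'\mid s,a)=\sum_{i=1}^{d'}u_{t,i}(s',s)w_{t,i}(a)$ for all $s',s,a$, or $P_t(s'\mid s,a)=\sum_{i=1}^{d'}u_{t,i}(s)w_{t,i}(s',a)$ for all $s',s,a$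 (and each reward $r_t$ has rank at most $d'$). *)

theory Defs
  imports "HOL-Analysis.Analysis"
begin

definition opnorm :: "real^'a^'s \<Rightarrow> real" where
  "opnorm M = onorm (\<lambda>x. M *v x)"

definition as_mat :: "('s::finite \<Rightarrow> 'a::finite \<Rightarrow> real) \<Rightarrow> real^'a^'s" where
  "as_mat f = (\<chi> s a. f s a)"

text \<open>Occupancy measures. occ mu P pol n is d_{n+1}^pol (time steps are 1-based:
  pol t is the policy at step t, P t s a s' = P_t(s' | s, a)).\<close>
primrec occ :: "('s::finite \<Rightarrow> real) \<Rightarrow> (nat \<Rightarrow> 's \<Rightarrow> 'a::finite \<Rightarrow> 's \<Rightarrow> real)
    \<Rightarrow> (nat \<Rightarrow> 's \<Rightarrow> 'a \<Rightarrow> real) \<Rightarrow> nat \<Rightarrow> 's \<Rightarrow> 'a \<Rightarrow> real" where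
  "occ mu P pol 0 s a = mu s * pol 1 s a"
| "occ mu P pol (Suc n) s' a' =
     (\<Sum>s\<in>UNIV. \<Sum>a\<in>UNIV. occ mu P pol n s a * P (Suc n) s a s') * pol (Suc (Suc n)) s' a'"

definition dist_occ :: "('s::finite \<Rightarrow> real) \<Rightarrow> (nat \<Rightarrow> 's \<Rightarrow> 'a::finite \<Rightarrow> 's \<Rightarrow> real)
    \<Rightarrow> (nat \<Rightarrow> 's \<Rightarrow> 'a \<Rightarrow> real) \<Rightarrow> nat \<Rightarrow> 's \<Rightarrow> 'a \<Rightarrow> real" where
  "dist_occ mu P pol t = occ mu P pol (t - 1)"

definition is_policy :: "nat \<Rightarrow> (nat \<Rightarrow> 's::finite \<Rightarrow> 'a::finite \<Rightarrow> real) \<Rightarrow> bool" where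
  "is_policy H pol \<longleftrightarrow> (\<forall>t\<in>{1..H}. \<forall>s. (\<forall>a. pol t s a \<ge> 0) \<and> (\<Sum>a\<in>UNIV. pol t s a) = 1)"

definition low_rank_mdp :: "nat \<Rightarrow> nat \<Rightarrow> (nat \<Rightarrow> 's::finite \<Rightarrow> 'a::finite \<Rightarrow> 's \<Rightarrow> real)
    \<Rightarrow> (nat \<Rightarrow> 's \<Rightarrow> 'a \<Rightarrow> real) \<Rightarrow> bool" where
  "low_rank_mdp d H P r \<longleftrightarrow>
     (\<forall>t\<in>{1..H}.
        ((\<exists>(u :: nat \<Rightarrow> 's \<Rightarrow> 's \<Rightarrow> real) (w :: nat \<Rightarrow> 'a \<Rightarrow> real).
            \<forall>s' s a. P t s a s' = (\<Sum>i=1..d div 2. u i s' s * w i a))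
        \<or> (\<exists>(u :: nat \<Rightarrow> 's \<Rightarrow> real) (w :: nat \<Rightarrow> 's \<Rightarrow> 'a \<Rightarrow> real).
            \<forall>s' s a. P t s a s' = (\<Sum>i=1..d div 2. u i s * w i s' a)))
        \<and> rank (as_mat (r t)) \<le> d div 2)"

end

theory Submission
  imports Defs
begin

lemma norm_sq_vec: "norm (x::'b::real_normed_vector^'n)^2 = (\<Sum>i\<in>UNIV. norm (x$i)^2)"
  unfolding norm_vec_def L2_set_def by (simp add: sum_nonneg)

lemma opnorm_le_norm: "opnorm (M::real^'a^'s) \<le> norm M"
  unfolding opnorm_def
proof (rule onorm_le)
  fix x :: "real^'a"
  have "norm (M *v x) \<le> norm (\<chi> s. norm x * norm (M$s))"
    unfolding matrix_mult_dot
    proof (rule norm_le_componentwise_cart)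
    fix i
    have "\<bar>inner (M$i) x\<bar> \<le> norm (M$i) * norm x" by (rule Cauchy_Schwarz_ineq2)
    then show "norm ((\<chi> s. inner (M$s) x) $ i) \<le> norm ((\<chi> s. norm x * norm (M$s)) $ i)"
      by (simp add: mult.commute)
  qed
  also have "(\<chi> s. norm x * norm (M$s)) = norm x *\<^sub>R (\<chi> s. norm (M$s))"
    by (simp add: vec_eq_iff)
  also have "norm (norm x *\<^sub>R (\<chi> s. norm (M$s))) = norm x * norm M"
    unfolding norm_scaleR by (simp add: norm_vec_def)
  finally show "norm (M *v x) \<le> norm M * norm x" by (simp add: mult.commute)
qed

lemma row_le_opnorm: "norm ((M::real^'a^'s) $ s) \<le> opnorm M"
proof -
  let ?r = "M $ s"
  have "norm ?r ^ 2 = (M *v ?r) $ s"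
    by (simp add: matrix_mult_dot power2_norm_eq_inner)
  also have "\<dots> \<le> norm (M *v ?r)" using component_le_norm_cart[of "M *v ?r" s] by simp
  also have "\<dots> \<le> opnorm M * norm ?r"
    unfolding opnorm_def by (rule onorm) simp
  finally have h: "norm ?r * norm ?r \<le> opnorm M * norm ?r" by (simp add: power2_eq_square)
  show ?thesis
  proof (cases "norm ?r = 0")
    case True then show ?thesis unfolding opnorm_def
      using onorm_pos_le[OF matrix_vector_mul_bounded_linear] by simp
  next
    case False then show ?thesis using h by simp
  qed
qed

lemma norm_sq_le_opnorm: "norm (M::real^'a^'s)^2 \<le> real CARD('s) * opnorm M ^ 2"
proof -
  have "norm M ^2 = (\<Sum>s\<in>UNIV. norm (M$s)^2)" by (rule norm_sq_vec)
  also have "\<dots> \<le> (\<Sum>s::'s\<in>UNIV. opnorm M ^2)"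
    proof (rule sum_mono)
    fix s :: 's
    show "norm (M$s)^2 \<le> opnorm M ^2" using row_le_opnorm[of M s] norm_ge_zero[of "M$s"]
      by (rule power_mono)
  qed
  finally show ?thesis by simp
qed

lemma opnorm_triangle: "opnorm ((A::real^'a^'s) + B) \<le> opnorm A + opnorm B"
  unfolding opnorm_def
proof (rule onorm_le)
  fix x
  have "norm ((A + B) *v x) \<le> norm (A *v x) + norm (B *v x)"
    by (simp add: matrix_vector_mult_add_rdistrib norm_triangle_ineq)
  also have "\<dots> \<le> onorm ((*v) A) * norm x + onorm ((*v) B) * norm x"
    by (intro add_mono onorm) simp_all
  finally show "norm ((A + B) *v x) \<le> (onorm ((*v) A) + onorm ((*v) B)) * norm x"
    by (simp add: algebra_simps)
qed

lemma opnorm_diag: assumes "\<And>s. \<bar>v s\<bar> \<le> 1"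
  shows "opnorm ((\<chi> s a. v s * M $ s $ a)::real^'a^'s) \<le> opnorm M"
  unfolding opnorm_def
proof (rule onorm_le)
  fix x :: "real^'a"
  have e: "(\<chi> s a. v s * M $ s $ a) *v x = (\<chi> s. v s * (M *v x) $ s)"
    by (simp add: matrix_vector_mult_def vec_eq_iff sum_distrib_left mult.assoc)
  have "norm ((\<chi> s. v s * (M *v x) $ s)) \<le> norm (M *v x)"
  proof (rule norm_le_componentwise_cart)
    fix i
    have "\<bar>v i\<bar> * \<bar>(M *v x) $ i\<bar> \<le> 1 * \<bar>(M *v x) $ i\<bar>"
      by (rule mult_right_mono) (simp_all add: assms)
    then show "norm ((\<chi> s. v s * (M *v x) $ s) $ i) \<le> norm ((M *v x) $ i)"
      by (simp add: abs_mult)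
  qed
  also have "\<dots> \<le> onorm ((*v) M) * norm x" by (rule onorm) simp
  finally show "norm ((\<chi> s a. v s * M $ s $ a) *v x) \<le> onorm ((*v) M) * norm x"
    using e by simp
qed


lemma occ_prob:
  fixes mu :: "'s::finite \<Rightarrow> real" and P :: "nat \<Rightarrow> 's \<Rightarrow> 'a::finite \<Rightarrow> 's \<Rightarrow> real"
  assumes mu_dist: "\<forall>s. mu s \<ge> 0" "(\<Sum>s\<in>UNIV. mu s) = 1"
    and P_kernel: "\<forall>t\<in>{1..H}. \<forall>s a. (\<forall>s'. P t s a s' \<ge> 0) \<and> (\<Sum>s'\<in>UNIV. P t s a s') = 1"
    and pol: "is_policy H pol"
  shows "n < H \<Longrightarrow> (\<forall>s a. occ mu P pol n s a \<ge> 0) \<and> (\<Sum>s\<in>UNIV. \<Sum>a\<in>UNIV. occ mu P pol n s a) = 1"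
proof (induction n)
  case 0
  then have p1: "\<forall>s. (\<forall>a. pol 1 s a \<ge> 0) \<and> (\<Sum>a\<in>UNIV. pol 1 s a) = 1"
    using pol unfolding is_policy_def by auto
  have "(\<Sum>s\<in>UNIV. \<Sum>a\<in>UNIV. mu s * pol 1 s a) = (\<Sum>s\<in>UNIV. mu s * (\<Sum>a\<in>UNIV. pol 1 s a))"
    by (simp add: sum_distrib_left)
  also have "\<dots> = 1" using p1 mu_dist by simp
  finally show ?case using p1 mu_dist by simp
next
  case (Suc n)
  then have IH: "(\<forall>s a. occ mu P pol n s a \<ge> 0) \<and> (\<Sum>s\<in>UNIV. \<Sum>a\<in>UNIV. occ mu P pol n s a) = 1"
    by simp
  have pk: "\<forall>s a. (\<forall>s'. P (Suc n) s a s' \<ge> 0) \<and> (\<Sum>s'\<in>UNIV. P (Suc n) s a s') = 1"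
    using P_kernel Suc.prems by auto
  have p2: "\<forall>s. (\<forall>a. pol (Suc (Suc n)) s a \<ge> 0) \<and> (\<Sum>a\<in>UNIV. pol (Suc (Suc n)) s a) = 1"
    using pol Suc.prems unfolding is_policy_def by auto
  define nu where "nu s' = (\<Sum>s\<in>UNIV. \<Sum>a\<in>UNIV. occ mu P pol n s a * P (Suc n) s a s')" for s'
  have nu0: "nu s' \<ge> 0" for s'
    unfolding nu_def using IH pk by (intro sum_nonneg mult_nonneg_nonneg) auto
  have "(\<Sum>s'\<in>UNIV. nu s') = (\<Sum>s\<in>UNIV. \<Sum>a\<in>UNIV. \<Sum>s'\<in>UNIV. occ mu P pol n s a * P (Suc n) s a s')"
    unfolding nu_def by (rule trans[OF sum.swap], rule sum.cong[OF refl], rule sum.swap)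
  also have "\<dots> = (\<Sum>s\<in>UNIV. \<Sum>a\<in>UNIV. occ mu P pol n s a * (\<Sum>s'\<in>UNIV. P (Suc n) s a s'))"
    by (simp add: sum_distrib_left)
  also have "\<dots> = 1" using pk IH by simp
  finally have nu1: "(\<Sum>s'\<in>UNIV. nu s') = 1" .
  have occS: "occ mu P pol (Suc n) s a = nu s * pol (Suc (Suc n)) s a" for s a
    by (simp add: nu_def)
  have "(\<Sum>s\<in>UNIV. \<Sum>a\<in>UNIV. occ mu P pol (Suc n) s a) = (\<Sum>s\<in>UNIV. nu s * (\<Sum>a\<in>UNIV. pol (Suc (Suc n)) s a))"
    unfolding occS by (simp add: sum_distrib_left)
  also have "\<dots> = 1" using p2 nu1 by simp
  finally have s1: "(\<Sum>s\<in>UNIV. \<Sum>a\<in>UNIV. occ mu P pol (Suc n) s a) = 1" .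
  have "\<forall>s a. occ mu P pol (Suc n) s a \<ge> 0" unfolding occS using nu0 p2 by simp
  with s1 show ?case by blast
qed

lemma main_bound:
  fixes H d :: nat
    and mu :: "'s::finite \<Rightarrow> real"
    and P :: "nat \<Rightarrow> 's \<Rightarrow> 'a::finite \<Rightarrow> 's \<Rightarrow> real"
    and pi_theta pi_beta :: "nat \<Rightarrow> 's \<Rightarrow> 'a \<Rightarrow> real"
  assumes mu_dist: "\<forall>s. mu s \<ge> 0" "(\<Sum>s\<in>UNIV. mu s) = 1"
    and P_kernel: "\<forall>t\<in>{1..H}. \<forall>s a. (\<forall>s'. P t s a s' \<ge> 0) \<and> (\<Sum>s'\<in>UNIV. P t s a s') = 1"
    and d1: "H \<ge> 2 \<Longrightarrow> d \<ge> 1"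
    and pol_theta: "is_policy H pi_theta"
    and pol_beta: "is_policy H pi_beta"
  defines "c \<equiv> sqrt (real d * real (CARD('s))^2 * real (CARD('a)))"
  shows "Suc n \<le> H \<Longrightarrow> opnorm (as_mat (occ mu P pi_theta n) - as_mat (occ mu P pi_beta n))
      \<le> (\<Sum>i=1..Suc n. c ^ (Suc n - i) * opnorm (as_mat (pi_theta i) - as_mat (pi_beta i)))"
proof (induction n)
  case 0
  have "as_mat (occ mu P pi_theta 0) - as_mat (occ mu P pi_beta 0)
     = (\<chi> s a. mu s * (as_mat (pi_theta 1) - as_mat (pi_beta 1)) $ s $ a)"
    by (simp add: as_mat_def vec_eq_iff algebra_simps)
  also have "opnorm \<dots> \<le> opnorm (as_mat (pi_theta 1) - as_mat (pi_beta 1))"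
  proof (rule opnorm_diag)
    fix s
    have "mu s \<le> (\<Sum>s\<in>UNIV. mu s)" by (rule member_le_sum) (use mu_dist in auto)
    then show "\<bar>mu s\<bar> \<le> 1" using mu_dist by auto
  qed
  finally show ?case by (simp del: occ.simps)
next
  case (Suc n)
  note IH = Suc.IH[OF Suc_leD[OF Suc.prems]]
  have nH: "n < H" using Suc.prems by simp
  have "H \<ge> 2" using Suc.prems by simp
  then have "d \<ge> 1" by (rule d1)
  have occT: "(\<forall>s a. occ mu P pi_theta n s a \<ge> 0) \<and> (\<Sum>s\<in>UNIV. \<Sum>a\<in>UNIV. occ mu P pi_theta n s a) = 1"
    by (rule occ_prob[OF mu_dist P_kernel pol_theta nH])
  have pk: "\<forall>s a. (\<forall>s'. P (Suc n) s a s' \<ge> 0) \<and> (\<Sum>s'\<in>UNIV. P (Suc n) s a s') = 1"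
    using P_kernel Suc.prems by auto
  have p2: "\<forall>s. (\<forall>a. pi_beta (Suc (Suc n)) s a \<ge> 0) \<and> (\<Sum>a\<in>UNIV. pi_beta (Suc (Suc n)) s a) = 1"
    using pol_beta Suc.prems unfolding is_policy_def by auto
  define nuT where "nuT s' = (\<Sum>s\<in>UNIV. \<Sum>a\<in>UNIV. occ mu P pi_theta n s a * P (Suc n) s a s')" for s'
  define nuB where "nuB s' = (\<Sum>s\<in>UNIV. \<Sum>a\<in>UNIV. occ mu P pi_beta n s a * P (Suc n) s a s')" for s'
  define D where "D = as_mat (occ mu P pi_theta n) - as_mat (occ mu P pi_beta n)"
  define Q where "Q s' = ((\<chi> s a. P (Suc n) s a s') :: real^'a^'s)" for s'
  define v where "v s' = nuT s' - nuB s'" for s'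
  define \<Delta> where "\<Delta> = as_mat (pi_theta (Suc (Suc n))) - as_mat (pi_beta (Suc (Suc n)))"
  define X where "X = ((\<chi> s a. nuT s * \<Delta> $ s $ a) :: real^'a^'s)"
  define Y where "Y = ((\<chi> s a. v s * pi_beta (Suc (Suc n)) s a) :: real^'a^'s)"
  have split: "as_mat (occ mu P pi_theta (Suc n)) - as_mat (occ mu P pi_beta (Suc n)) = X + Y"
    by (simp add: X_def Y_def v_def \<Delta>_def nuT_def nuB_def as_mat_def vec_eq_iff algebra_simps)
  have nuT0: "nuT s' \<ge> 0" for s'
    unfolding nuT_def using occT pk by (intro sum_nonneg mult_nonneg_nonneg) auto
  have "(\<Sum>s'\<in>UNIV. nuT s') = (\<Sum>s\<in>UNIV. \<Sum>a\<in>UNIV. \<Sum>s'\<in>UNIV. occ mu P pi_theta n s a * P (Suc n) s a s')"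
    unfolding nuT_def by (rule trans[OF sum.swap], rule sum.cong[OF refl], rule sum.swap)
  also have "\<dots> = (\<Sum>s\<in>UNIV. \<Sum>a\<in>UNIV. occ mu P pi_theta n s a * (\<Sum>s'\<in>UNIV. P (Suc n) s a s'))"
    by (simp add: sum_distrib_left)
  also have "\<dots> = 1" using pk occT by simp
  finally have nuT1: "(\<Sum>s'\<in>UNIV. nuT s') = 1" .
  have "opnorm X \<le> opnorm \<Delta>"
    unfolding X_def
  proof (rule opnorm_diag)
    fix s
    have "nuT s \<le> (\<Sum>s\<in>UNIV. nuT s)" by (rule member_le_sum) (use nuT0 in auto)
    then show "\<bar>nuT s\<bar> \<le> 1" using nuT0 nuT1 by auto
  qed
  have vinner: "v s' = inner D (Q s')" for s'
    by (simp add: v_def nuT_def nuB_def D_def Q_def inner_vec_def as_mat_def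
        sum_subtractf[symmetric] algebra_simps)
  have v2: "v s' ^ 2 \<le> norm D ^ 2 * norm (Q s') ^ 2" for s'
  proof -
    have "\<bar>v s'\<bar> \<le> norm D * norm (Q s')" unfolding vinner by (rule Cauchy_Schwarz_ineq2)
    then have "\<bar>v s'\<bar>^2 \<le> (norm D * norm (Q s'))^2" by (rule power_mono) simp
    then show ?thesis by (simp add: power_mult_distrib)
  qed
  have Ple1: "P (Suc n) s a s' \<le> 1" for s a s'
  proof -
    have "P (Suc n) s a s' \<le> (\<Sum>s'\<in>UNIV. P (Suc n) s a s')" by (rule member_le_sum) (use pk in auto)
    then show ?thesis using pk by simp
  qed
  have Q2: "(\<Sum>s'\<in>UNIV. norm (Q s') ^ 2) \<le> real CARD('s) * real CARD('a)"
  proof -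
    have "(\<Sum>s'\<in>UNIV. norm (Q s') ^ 2) = (\<Sum>s'\<in>UNIV. \<Sum>s\<in>UNIV. \<Sum>a\<in>UNIV. P (Suc n) s a s' ^ 2)"
      by (simp add: norm_sq_vec Q_def del: norm_vec_def)
    also have "\<dots> = (\<Sum>s\<in>UNIV. \<Sum>a\<in>UNIV. \<Sum>s'\<in>UNIV. P (Suc n) s a s' ^ 2)"
      by (rule trans[OF sum.swap], rule sum.cong[OF refl], rule sum.swap)
    also have "\<dots> \<le> (\<Sum>s::'s\<in>UNIV. \<Sum>a::'a\<in>UNIV. 1)"
    proof (intro sum_mono)
      fix s a
      have "(\<Sum>s'\<in>UNIV. P (Suc n) s a s' ^ 2) \<le> (\<Sum>s'\<in>UNIV. P (Suc n) s a s')"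
      proof (rule sum_mono)
        fix s'
        have "P (Suc n) s a s' * P (Suc n) s a s' \<le> 1 * P (Suc n) s a s'"
          by (rule mult_right_mono) (use Ple1 pk in auto)
        then show "P (Suc n) s a s' ^ 2 \<le> P (Suc n) s a s'" by (simp add: power2_eq_square)
      qed
      then show "(\<Sum>s'\<in>UNIV. P (Suc n) s a s' ^ 2) \<le> 1" using pk by simp
    qed
    finally show ?thesis by simp
  qed
  have sumv: "(\<Sum>s'\<in>UNIV. v s' ^ 2) \<le> norm D ^ 2 * (real CARD('s) * real CARD('a))"
  proof -
    have "(\<Sum>s'\<in>UNIV. v s' ^ 2) \<le> (\<Sum>s'\<in>UNIV. norm D ^ 2 * norm (Q s') ^ 2)"
      by (rule sum_mono) (rule v2)
    also have "\<dots> = norm D ^ 2 * (\<Sum>s'\<in>UNIV. norm (Q s') ^ 2)" by (simp add: sum_distrib_left)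
    also have "\<dots> \<le> norm D ^ 2 * (real CARD('s) * real CARD('a))"
      by (rule mult_left_mono[OF Q2]) simp
    finally show ?thesis .
  qed
  have Y2: "norm Y ^ 2 \<le> (\<Sum>s'\<in>UNIV. v s' ^ 2)"
  proof -
    have "norm Y ^ 2 = (\<Sum>s\<in>UNIV. \<Sum>a\<in>UNIV. (v s * pi_beta (Suc (Suc n)) s a)^2)"
      by (simp add: norm_sq_vec Y_def del: norm_vec_def)
    also have "\<dots> = (\<Sum>s\<in>UNIV. v s ^ 2 * (\<Sum>a\<in>UNIV. (pi_beta (Suc (Suc n)) s a)^2))"
      by (simp add: power_mult_distrib sum_distrib_left)
    also have "\<dots> \<le> (\<Sum>s\<in>UNIV. v s ^ 2 * 1)"
    proof (intro sum_mono mult_left_mono)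
      fix s
      let ?p = "pi_beta (Suc (Suc n)) s"
      have le1: "?p a \<le> 1" for a
      proof -
        have "?p a \<le> (\<Sum>a\<in>UNIV. ?p a)" by (rule member_le_sum) (use p2 in auto)
        then show ?thesis using p2 by simp
      qed
      have "(\<Sum>a\<in>UNIV. (?p a)^2) \<le> (\<Sum>a\<in>UNIV. ?p a)"
      proof (rule sum_mono)
        fix a
        have "?p a * ?p a \<le> 1 * ?p a" by (rule mult_right_mono) (use le1 p2 in auto)
        then show "(?p a)^2 \<le> ?p a" by (simp add: power2_eq_square)
      qed
      then show "(\<Sum>a\<in>UNIV. (?p a)^2) \<le> 1" using p2 by simp
    qed simp
    finally show ?thesis by simp
  qed
  have cnn: "c \<ge> 0" unfolding c_def by simp
  have Ybound: "norm Y \<le> c * opnorm D"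
  proof (rule power2_le_imp_le)
    have "norm Y ^ 2 \<le> norm D ^ 2 * (real CARD('s) * real CARD('a))" using Y2 sumv by linarith
    also have "\<dots> \<le> (real CARD('s) * opnorm D ^ 2) * (real CARD('s) * real CARD('a))"
      by (rule mult_right_mono[OF norm_sq_le_opnorm]) simp
    also have "\<dots> = 1 * real CARD('s) ^ 2 * real CARD('a) * opnorm D ^ 2"
      by (simp add: power2_eq_square)
    also have "\<dots> \<le> real d * real CARD('s) ^ 2 * real CARD('a) * opnorm D ^ 2"
      using \<open>d \<ge> 1\<close> by (intro mult_right_mono) auto
    also have "\<dots> = (c * opnorm D)^2"
      unfolding c_def by (simp add: power_mult_distrib)
    finally show "norm Y ^ 2 \<le> (c * opnorm D)^2" .
    show "0 \<le> c * opnorm D" using cnn unfolding opnorm_def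
      by (simp add: onorm_pos_le)
  qed
  have "opnorm (X + Y) \<le> opnorm X + opnorm Y" by (rule opnorm_triangle)
  also have "\<dots> \<le> opnorm \<Delta> + c * opnorm D"
    using \<open>opnorm X \<le> opnorm \<Delta>\<close> opnorm_le_norm[of Y] Ybound by linarith
  also have "\<dots> \<le> opnorm \<Delta> + c * (\<Sum>i=1..Suc n. c ^ (Suc n - i) * opnorm (as_mat (pi_theta i) - as_mat (pi_beta i)))"
    using IH cnn unfolding D_def by (simp add: mult_left_mono)
  also have "\<dots> = (\<Sum>i=1..Suc (Suc n). c ^ (Suc (Suc n) - i) * opnorm (as_mat (pi_theta i) - as_mat (pi_beta i)))"
  proof -
    have "c * (\<Sum>i=1..Suc n. c ^ (Suc n - i) * opnorm (as_mat (pi_theta i) - as_mat (pi_beta i)))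
       = (\<Sum>i=1..Suc n. c ^ (Suc (Suc n) - i) * opnorm (as_mat (pi_theta i) - as_mat (pi_beta i)))"
      unfolding sum_distrib_left
      by (rule sum.cong) (auto simp: Suc_diff_le)
    then show ?thesis by (simp add: \<Delta>_def)
  qed
  finally show ?case unfolding split .
qed

theorem lemma1:
  fixes H d :: nat
    and mu :: "'s::finite \<Rightarrow> real"
    and P :: "nat \<Rightarrow> 's \<Rightarrow> 'a::finite \<Rightarrow> 's \<Rightarrow> real"
    and r :: "nat \<Rightarrow> 's \<Rightarrow> 'a \<Rightarrow> real"
    and pi_theta pi_beta :: "nat \<Rightarrow> 's \<Rightarrow> 'a \<Rightarrow> real"
  assumes mu_dist: "\<forall>s. mu s \<ge> 0" "(\<Sum>s\<in>UNIV. mu s) = 1"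
    and P_kernel: "\<forall>t\<in>{1..H}. \<forall>s a. (\<forall>s'. P t s a s' \<ge> 0) \<and> (\<Sum>s'\<in>UNIV. P t s a s') = 1"
    and low_rank: "low_rank_mdp d H P r"
    and pol_theta: "is_policy H pi_theta"
    and pol_beta: "is_policy H pi_beta"
  shows "\<forall>t\<in>{1..H}.
    opnorm (as_mat (dist_occ mu P pi_theta t) - as_mat (dist_occ mu P pi_beta t))
      \<le> (\<Sum>i=1..t. sqrt (real d * real (CARD('s))^2 * real (CARD('a))) ^ (t - i)
                     * opnorm (as_mat (pi_theta i) - as_mat (pi_beta i)))"
proof
  fix t assume t: "t \<in> {1..H}"
  have d1: "d \<ge> 1" if "H \<ge> 2"
  proof (rule ccontr)
    assume "\<not> d \<ge> 1"
    then have dz: "d div 2 = 0" by simp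
    have "1 \<in> {1..H}" using that by simp
    then have "(\<exists>(u :: nat \<Rightarrow> 's \<Rightarrow> 's \<Rightarrow> real) (w :: nat \<Rightarrow> 'a \<Rightarrow> real).
            \<forall>s' s a. P 1 s a s' = (\<Sum>i=1..d div 2. u i s' s * w i a))
        \<or> (\<exists>(u :: nat \<Rightarrow> 's \<Rightarrow> real) (w :: nat \<Rightarrow> 's \<Rightarrow> 'a \<Rightarrow> real).
            \<forall>s' s a. P 1 s a s' = (\<Sum>i=1..d div 2. u i s * w i s' a))"
      using low_rank unfolding low_rank_mdp_def by blast
    then have "\<forall>s' s a. P 1 s a s' = 0" using dz by auto
    moreover have "(\<Sum>s'\<in>UNIV. P 1 undefined undefined s') = 1"
      using P_kernel \<open>1 \<in> {1..H}\<close> by blast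
    ultimately show False by simp
  qed
  obtain n where n: "t = Suc n" using t by (cases t) auto
  have "Suc n \<le> H" using t n by simp
  from main_bound[OF mu_dist P_kernel d1 pol_theta pol_beta this]
  show "opnorm (as_mat (dist_occ mu P pi_theta t) - as_mat (dist_occ mu P pi_beta t))
      \<le> (\<Sum>i=1..t. sqrt (real d * real (CARD('s))^2 * real (CARD('a))) ^ (t - i)
                     * opnorm (as_mat (pi_theta i) - as_mat (pi_beta i)))"
    unfolding dist_occ_def n by simp
qed

end
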